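(* Let $X$ be a unital Banach algebra with unit $e$, let $\theta\in X$, and let $M_\theta$ be either the left multiplication operator $y\mapsto\theta y$ or the right multiplication operator $y\mapsto y\theta$ on $X$. Then $M_\theta$ is recurrent if and only if $M_\theta$ is hyper-recurrent. Moreover, in this case $G(X)\subset\mathrm{Hr}(M_\theta)$, where $G(X)$ is the group of invertible elements of $X$.
   Context: For a bounded operator $T$ on a Banach space $X$: $x$ is recurrent if $T^{\omega_n}x\to x$ for some strictly increasing sequence $(\omega_n)$ of positive integers; $\mathrm{Rec}(T)$ is the set of recurrent vectors and $T$ is recurrent if $\mathrm{Rec}(T)$ is dense. $\mathfrak{C}$ is the set of strictly increasing sequences $\omega$ with $T^{\omega_n}x\to x$ for some $x\ne0$; $\mathfrak{L}(\omega)=\{x:T^{\omega_n}x\to x\}$. $\mathrm{Hr}(T)$ is the set of $x\in\mathrm{Rec}(T)$ such that $\mathfrak{L}(\omega)$ is dense for every $\omega\in\mathfrak{C}$ with $x\in\mathfrak{L}(\omega)$; a recurrent $T$ is hyper-recurrent if $\mathrm{Hr}(T)\ne\emptyset$. *)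

theory Defs
  imports "HOL-Analysis.Analysis"
begin

definition pos_incseq :: "(nat \<Rightarrow> nat) \<Rightarrow> bool" where
  "pos_incseq \<omega> \<longleftrightarrow> strict_mono \<omega> \<and> (\<forall>n. 0 < \<omega> n)"

definition Rec :: "('a::real_normed_vector \<Rightarrow> 'a) \<Rightarrow> 'a set" where
  "Rec T = {x. \<exists>\<omega>. pos_incseq \<omega> \<and> (\<lambda>n. (T ^^ \<omega> n) x) \<longlonglongrightarrow> x}"

definition recurrent_op :: "('a::real_normed_vector \<Rightarrow> 'a) \<Rightarrow> bool" where
  "recurrent_op T \<longleftrightarrow> closure (Rec T) = UNIV"

definition frakL :: "('a::real_normed_vector \<Rightarrow> 'a) \<Rightarrow> (nat \<Rightarrow> nat) \<Rightarrow> 'a set" where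
  "frakL T \<omega> = {x. (\<lambda>n. (T ^^ \<omega> n) x) \<longlonglongrightarrow> x}"

definition frakC :: "('a::real_normed_vector \<Rightarrow> 'a) \<Rightarrow> (nat \<Rightarrow> nat) set" where
  "frakC T = {\<omega>. pos_incseq \<omega> \<and> (\<exists>x. x \<noteq> 0 \<and> (\<lambda>n. (T ^^ \<omega> n) x) \<longlonglongrightarrow> x)}"

definition Hr :: "('a::real_normed_vector \<Rightarrow> 'a) \<Rightarrow> 'a set" where
  "Hr T = {x \<in> Rec T. \<forall>\<omega>\<in>frakC T. x \<in> frakL T \<omega> \<longrightarrow> closure (frakL T \<omega>) = UNIV}"

definition hyper_recurrent :: "('a::real_normed_vector \<Rightarrow> 'a) \<Rightarrow> bool" where
  "hyper_recurrent T \<longleftrightarrow> recurrent_op T \<and> Hr T \<noteq> {}"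

definition invertibles :: "'a::ring_1 set" where
  "invertibles = {x. \<exists>y. x * y = 1 \<and> y * x = 1}"

end

theory Submission
  imports Defs
begin

lemma geo_partial:
  fixes z :: "'a::ring_1"
  shows "(1 - z) * (\<Sum>k<n. z^k) = 1 - z^n \<and> (\<Sum>k<n. z^k) * (1 - z) = 1 - z^n"
proof (induction n)
  case 0 then show ?case by simp
next
  case (Suc n)
  have a: "(1 - z) * (\<Sum>k<Suc n. z^k) = (1 - z) * (\<Sum>k<n. z^k) + z^n - z * z^n"
    by (simp add: algebra_simps)
  have b: "(\<Sum>k<Suc n. z^k) * (1 - z) = (\<Sum>k<n. z^k) * (1 - z) + z^n - z^n * z"
    by (simp add: algebra_simps)
  show ?case using a b Suc.IH by (simp add: power_Suc2[symmetric] del: power_Suc2)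
qed

lemma neumann:
  fixes z :: "'a::{real_normed_algebra_1, banach}"
  assumes "norm z < 1"
  shows "(1 - z) \<in> invertibles"
proof -
  have sm: "summable (\<lambda>k. z^k)"
  proof (rule summable_comparison_test')
    show "summable (\<lambda>k. norm z ^ k)" using assms by (simp add: summable_geometric)
    show "norm (z ^ n) \<le> norm z ^ n" for n by (rule norm_power_ineq)
  qed
  define s where "s = suminf (\<lambda>k. z^k)"
  have S: "(\<lambda>n. \<Sum>k<n. z^k) \<longlonglongrightarrow> s" unfolding s_def using sm by (rule summable_LIMSEQ)
  have P: "(\<lambda>n. z^n) \<longlonglongrightarrow> 0" using assms by (rule LIMSEQ_power_zero)
  have L1: "(\<lambda>n. (1 - z) * (\<Sum>k<n. z^k)) \<longlonglongrightarrow> (1 - z) * s"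
    by (intro tendsto_intros S)
  have L2: "(\<lambda>n. (\<Sum>k<n. z^k) * (1 - z)) \<longlonglongrightarrow> s * (1 - z)"
    by (intro tendsto_intros S)
  have L3: "(\<lambda>n. 1 - z^n) \<longlonglongrightarrow> 1"
    using tendsto_diff[OF tendsto_const P, of 1] by simp
  have e1: "(\<lambda>n. (1 - z) * (\<Sum>k<n. z^k)) = (\<lambda>n. 1 - z^n)" using geo_partial[of z] by simp
  have e2: "(\<lambda>n. (\<Sum>k<n. z^k) * (1 - z)) = (\<lambda>n. 1 - z^n)" using geo_partial[of z] by simp
  have "(1 - z) * s = 1"
    using L1 L3 unfolding e1 by (rule LIMSEQ_unique)
  moreover have "s * (1 - z) = 1"
    using L2 L3 unfolding e2 by (rule LIMSEQ_unique)
  ultimately show ?thesis unfolding invertibles_def by blast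
qed

lemma inv_in_Rec:
  fixes T :: "'a::{real_normed_algebra_1, banach} \<Rightarrow> 'a"
  assumes "closure (Rec T) = UNIV"
  shows "\<exists>x\<in>Rec T. x \<in> invertibles"
proof -
  have "(1::'a) \<in> closure (Rec T)" using assms by simp
  then obtain y where y: "y \<in> Rec T" "dist y 1 < 1"
    using closure_approachable[of 1 "Rec T"] by (metis zero_less_one)
  have "norm (1 - y) < 1" using y(2) by (simp add: dist_norm norm_minus_commute)
  then have "1 - (1 - y) \<in> invertibles" by (rule neumann)
  then show ?thesis using y(1) by auto
qed

lemma funpow_left: "((\<lambda>y. \<theta> * y) ^^ n) y = (\<theta>::'a::monoid_mult) ^ n * y"
  by (induction n) (simp_all add: mult.assoc)

lemma funpow_right: "((\<lambda>y. y * \<theta>) ^^ n) y = y * (\<theta>::'a::monoid_mult) ^ n"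
  by (induction n) (simp_all add: mult.assoc power_Suc2[symmetric] del: power_Suc2)

lemma key:
  fixes \<theta> :: "'a::{real_normed_algebra_1, banach}"
    and M :: "'a \<Rightarrow> 'a"
  assumes "M = (\<lambda>y. \<theta> * y) \<or> M = (\<lambda>y. y * \<theta>)"
    and "g \<in> invertibles" and "g \<in> frakL M \<omega>"
  shows "frakL M \<omega> = UNIV"
proof -
  obtain h where h: "g * h = 1" "h * g = 1" using assms(2) unfolding invertibles_def by blast
  show ?thesis
  using assms(1)
  proof
    assume M: "M = (\<lambda>y. \<theta> * y)"
    have "(\<lambda>n. \<theta> ^ \<omega> n * g) \<longlonglongrightarrow> g"
      using assms(3) unfolding frakL_def M funpow_left by simp
    then have "(\<lambda>n. (\<theta> ^ \<omega> n * g) * h) \<longlonglongrightarrow> g * h" by (intro tendsto_intros)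
    then have T: "(\<lambda>n. \<theta> ^ \<omega> n) \<longlonglongrightarrow> 1" using h by (simp add: mult.assoc)
    have "(\<lambda>n. \<theta> ^ \<omega> n * y) \<longlonglongrightarrow> y" for y
      using tendsto_mult[OF T tendsto_const[of y]] by simp
    then show ?thesis unfolding frakL_def M funpow_left by auto
  next
    assume M: "M = (\<lambda>y. y * \<theta>)"
    have "(\<lambda>n. g * \<theta> ^ \<omega> n) \<longlonglongrightarrow> g"
      using assms(3) unfolding frakL_def M funpow_right by simp
    then have "(\<lambda>n. h * (g * \<theta> ^ \<omega> n)) \<longlonglongrightarrow> h * g" by (intro tendsto_intros)
    then have T: "(\<lambda>n. \<theta> ^ \<omega> n) \<longlonglongrightarrow> 1" using h by (simp add: mult.assoc[symmetric])
    have "(\<lambda>n. y * \<theta> ^ \<omega> n) \<longlonglongrightarrow> y" for y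
      using tendsto_mult[OF tendsto_const[of y] T] by simp
    then show ?thesis unfolding frakL_def M funpow_right by auto
  qed
qed

theorem theorem5p5:
  fixes \<theta> :: "'a::{real_normed_algebra_1, banach}"
    and M :: "'a \<Rightarrow> 'a"
  assumes "M = (\<lambda>y. \<theta> * y) \<or> M = (\<lambda>y. y * \<theta>)"
  shows "(recurrent_op M \<longleftrightarrow> hyper_recurrent M)
         \<and> (recurrent_op M \<longrightarrow> invertibles \<subseteq> Hr M)"
proof -
  have A: "invertibles \<subseteq> Hr M" if R: "recurrent_op M"
  proof
    fix g :: 'a assume g: "g \<in> invertibles"
    obtain x where x: "x \<in> Rec M" "x \<in> invertibles"
      using inv_in_Rec R unfolding recurrent_op_def by blast
    then obtain \<omega> where w: "pos_incseq \<omega>" "x \<in> frakL M \<omega>"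
      unfolding Rec_def frakL_def by blast
    have "frakL M \<omega> = UNIV" by (rule key[OF assms x(2) w(2)])
    then have "g \<in> Rec M" using w(1) unfolding Rec_def frakL_def by blast
    moreover have "\<forall>\<omega>'\<in>frakC M. g \<in> frakL M \<omega>' \<longrightarrow> closure (frakL M \<omega>') = UNIV"
    proof (intro ballI impI)
      fix \<omega>' assume "g \<in> frakL M \<omega>'"
      then have "frakL M \<omega>' = UNIV" by (rule key[OF assms g])
      then show "closure (frakL M \<omega>') = UNIV" by simp
    qed
    ultimately show "g \<in> Hr M" unfolding Hr_def by blast
  qed
  have "(1::'a) \<in> invertibles" unfolding invertibles_def by auto
  then have "recurrent_op M \<Longrightarrow> hyper_recurrent M"
    using A unfolding hyper_recurrent_def by blast
  then show ?thesis using A unfolding hyper_recurrent_def by blast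
qed

end
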